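(* Let the words $C_n$, $D_n$ over $\{1,2\}$ be defined by $C_1=1$, $D_1=2$, $C_{k+1}=C_k\,1\,D_k$, $D_{k+1}=C_k\,2\,D_k$ for $k\ge 1$. For a word $w=w_1\cdots w_m$, let $N_{12}(w)$ be the number of pairs $i<j$ with $w_i=1$, $w_j=2$, and $N_{21}(w)$ the number of pairs $i<j$ with $w_i=2$, $w_j=1$. Then for all $n\geq 2$, $$N_{12}(C_n)=N_{12}(D_n)=2\cdot 4^{n-2}+(n-2)\cdot 2^{n-2},\qquad N_{21}(C_n)=N_{21}(D_n)=2\cdot 4^{n-2}-n\cdot 2^{n-2}.$$
   Context: $N_{12}(w)$ and $N_{21}(w)$ are the numbers of occurrences in $w$ of the classical patterns $1\text{-}2$ and $2\text{-}1$ respectively. *)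

theory Defs
  imports Main
begin

text \<open>Words over the alphabet {1,2} are represented as lists of naturals.
  CD n = (C_n, D_n) for n \<ge> 1; the value at 0 is an unused placeholder
  (chosen equal to the n = 1 case).\<close>

fun CD :: "nat \<Rightarrow> nat list \<times> nat list" where
  "CD 0 = ([1], [2])"
| "CD (Suc 0) = ([1], [2])"
| "CD (Suc (Suc k)) = (let (c, d) = CD (Suc k) in (c @ [1] @ d, c @ [2] @ d))"

definition C :: "nat \<Rightarrow> nat list" where "C n = fst (CD n)"
definition D :: "nat \<Rightarrow> nat list" where "D n = snd (CD n)"

definition Npat :: "nat \<Rightarrow> nat \<Rightarrow> nat list \<Rightarrow> nat" where
  "Npat a b w = card {(i, j). i < j \<and> j < length w \<and> w ! i = a \<and> w ! j = b}"

definition N12 :: "nat list \<Rightarrow> nat" where "N12 w = Npat 1 2 w"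
definition N21 :: "nat list \<Rightarrow> nat" where "N21 w = Npat 2 1 w"

end

theory Submission
  imports Defs
begin

lemma cnt_eq: "card {j. j < length xs \<and> xs ! j = b} = count_list xs b"
proof -
  have "card {j. j < length xs \<and> xs ! j = b} = length (filter ((=) b) xs)"
    by (simp add: length_filter_conv_card eq_commute)
  also have "\<dots> = count_list xs b" by (induction xs) auto
  finally show ?thesis .
qed

lemma Npat_Nil: "Npat a b [] = 0"
  by (simp add: Npat_def)

lemma Npat_Cons: "Npat a b (x # xs) = (if x = a then count_list xs b else 0) + Npat a b xs"
proof -
  let ?S = "\<lambda>w. {(i, j). i < j \<and> j < length w \<and> w ! i = a \<and> w ! j = b}"
  let ?A = "if x = a then (\<lambda>j. (0::nat, Suc j)) ` {j. j < length xs \<and> xs ! j = b} else {}"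
  let ?B = "(\<lambda>(i, j). (Suc i, Suc j)) ` ?S xs"
  have fin: "finite (?S w)" for w
    by (rule finite_subset[of _ "{..<length w} \<times> {..<length w}"]) auto
  have eq: "?S (x # xs) = ?A \<union> ?B"
  proof (rule set_eqI, clarify)
    fix i j
    show "((i, j) \<in> ?S (x # xs)) = ((i, j) \<in> ?A \<union> ?B)"
    proof (cases i)
      case 0
      then show ?thesis by (cases j) auto
    next
      case (Suc i')
      then show ?thesis by (cases j) (auto simp: image_iff)
    qed
  qed
  have disj: "?A \<inter> ?B = {}" by auto
  have cA: "card ?A = (if x = a then count_list xs b else 0)"
    by (simp add: card_image inj_on_def cnt_eq)
  have cB: "card ?B = card (?S xs)"
    by (rule card_image) (auto simp: inj_on_def)
  have "card (?S (x # xs)) = card ?A + card ?B"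
    unfolding eq by (rule card_Un_disjoint) (use fin in auto)
  then show ?thesis unfolding Npat_def using cA cB by simp
qed

lemma Npat_append: "Npat a b (xs @ ys) = Npat a b xs + Npat a b ys + count_list xs a * count_list ys b"
  by (induction xs) (auto simp: Npat_Cons Npat_Nil)

lemma CD_Suc: "C (Suc (Suc k)) = C (Suc k) @ [1] @ D (Suc k)"
  "D (Suc (Suc k)) = C (Suc k) @ [2] @ D (Suc k)"
  by (simp_all add: C_def D_def split: prod.splits)

lemma counts: "count_list (C (Suc m)) 1 = 2 ^ m \<and> count_list (C (Suc m)) 2 = 2 ^ m - 1
  \<and> count_list (D (Suc m)) 1 = 2 ^ m - 1 \<and> count_list (D (Suc m)) 2 = 2 ^ m"
proof (induction m)
  case 0
  then show ?case by (simp add: C_def D_def)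
next
  case (Suc m)
  have "(1::nat) \<le> 2 ^ m" by simp
  then show ?case using Suc by (simp add: CD_Suc)
qed

lemma main: "int (N12 (C (m+2))) = 2 * 4 ^ m + int m * 2 ^ m
       \<and> int (N12 (D (m+2))) = 2 * 4 ^ m + int m * 2 ^ m
       \<and> int (N21 (C (m+2))) = 2 * 4 ^ m - int (m+2) * 2 ^ m
       \<and> int (N21 (D (m+2))) = 2 * 4 ^ m - int (m+2) * 2 ^ m"
proof (induction m)
  case 0
  then show ?case
    by (simp add: C_def D_def N12_def N21_def numeral_2_eq_2 Npat_append Npat_Cons Npat_Nil)
next
  case (Suc m)
  have e: "m + 2 = Suc (Suc m)" "Suc m + 2 = Suc (Suc (Suc m))" by simp_all
  have c: "count_list (C (Suc (Suc m))) 1 = 2 ^ Suc m" "count_list (C (Suc (Suc m))) 2 = 2 ^ Suc m - 1"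
    "count_list (D (Suc (Suc m))) 1 = 2 ^ Suc m - 1" "count_list (D (Suc (Suc m))) 2 = 2 ^ Suc m"
    using counts[of "Suc m"] by auto
  have p: "(1::nat) \<le> 2 ^ Suc m" by simp
  have c': "int (count_list (C (Suc (Suc m))) 2) = 2 * 2 ^ m - 1"
     "int (count_list (D (Suc (Suc m))) 1) = 2 * 2 ^ m - 1"
    using c(2,3) p by (simp_all add: of_nat_diff)
  have f: "(4::int) ^ m = 2 ^ m * 2 ^ m" by (simp add: power_mult_distrib[symmetric])
  have IH: "int (Npat 1 2 (C (Suc (Suc m)))) = 2 * 4 ^ m + int m * 2 ^ m"
     "int (Npat 1 2 (D (Suc (Suc m)))) = 2 * 4 ^ m + int m * 2 ^ m"
     "int (Npat 2 1 (C (Suc (Suc m)))) = 2 * 4 ^ m - int (m+2) * 2 ^ m"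
     "int (Npat 2 1 (D (Suc (Suc m)))) = 2 * 4 ^ m - int (m+2) * 2 ^ m"
    using Suc.IH unfolding e N12_def N21_def by auto
  let ?X = "C (Suc (Suc m))" and ?Y = "D (Suc (Suc m))"
  have h: "Npat 1 2 (?X @ [1] @ ?Y) = Npat 1 2 ?X + Npat 1 2 ?Y + count_list ?X 1 * count_list ?Y 2 + count_list ?Y 2"
    "Npat 1 2 (?X @ [2] @ ?Y) = Npat 1 2 ?X + Npat 1 2 ?Y + count_list ?X 1 * count_list ?Y 2 + count_list ?X 1"
    "Npat 2 1 (?X @ [1] @ ?Y) = Npat 2 1 ?X + Npat 2 1 ?Y + count_list ?X 2 * count_list ?Y 1 + count_list ?X 2"
    "Npat 2 1 (?X @ [2] @ ?Y) = Npat 2 1 ?X + Npat 2 1 ?Y + count_list ?X 2 * count_list ?Y 1 + count_list ?Y 1"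
    by (simp_all add: Npat_append Npat_Cons Npat_Nil)
  have c2: "int (count_list ?X 1) = 2 * 2 ^ m" "int (count_list ?Y 2) = 2 * 2 ^ m"
    using c(1,4) by simp_all
  show ?case unfolding e CD_Suc(1,2)[of "Suc m"] N12_def N21_def h of_nat_add of_nat_mult
    unfolding IH c2 c' f by (simp add: algebra_simps flip: power_mult_distrib)
qed

theorem proposition3:
  fixes n :: nat
  assumes "n \<ge> 2"
  shows "int (N12 (C n)) = 2 * 4 ^ (n - 2) + int (n - 2) * 2 ^ (n - 2)
       \<and> int (N12 (D n)) = 2 * 4 ^ (n - 2) + int (n - 2) * 2 ^ (n - 2)
       \<and> int (N21 (C n)) = 2 * 4 ^ (n - 2) - int n * 2 ^ (n - 2)
       \<and> int (N21 (D n)) = 2 * 4 ^ (n - 2) - int n * 2 ^ (n - 2)"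
proof -
  obtain m where "n = m + 2" using assms le_Suc_ex by (metis add.commute)
  then show ?thesis using main[of m] by simp
qed

end
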